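(* Let $\Sigma$ be a finite alphabet and let $\mathbf w$ be a right-infinite word over $\Sigma$ with linear factor complexity. Then the set of primitive factors $y$ of $\mathbf w$ such that $y^n$ is a factor of $\mathbf w$ for every $n\ge 1$ is finite.
   Context: A factor of $\mathbf w$ is a finite block of contiguous symbols of $\mathbf w$. A nonempty word is primitive if it is not of the form $z^m$ with $m\ge 2$. $p_{\mathbf w}(n)$ is the number of distinct factors of $\mathbf w$ of length $n$; $\mathbf w$ has linear factor complexity if there are constants $A,B$ with $p_{\mathbf w}(n)\le An+B$ for all $n$. *)

theory Defs
  imports Complex_Main
begin

definition factor :: "'a list \<Rightarrow> (nat \<Rightarrow> 'a) \<Rightarrow> bool" where
  "factor u w \<longleftrightarrow> (\<exists>i. u = map w [i..<i + length u])"

definition factors_of_length :: "(nat \<Rightarrow> 'a) \<Rightarrow> nat \<Rightarrow> 'a list set" where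
  "factors_of_length w n = {u. length u = n \<and> factor u w}"

definition complexity :: "(nat \<Rightarrow> 'a) \<Rightarrow> nat \<Rightarrow> nat" where
  "complexity w n = card (factors_of_length w n)"

definition linear_complexity :: "(nat \<Rightarrow> 'a) \<Rightarrow> bool" where
  "linear_complexity w \<longleftrightarrow> (\<exists>A B::real. \<forall>n. real (complexity w n) \<le> A * real n + B)"

definition list_pow :: "'a list \<Rightarrow> nat \<Rightarrow> 'a list" where
  "list_pow z m = concat (replicate m z)"

definition primitive :: "'a list \<Rightarrow> bool" where
  "primitive y \<longleftrightarrow> y \<noteq> [] \<and> \<not> (\<exists>z m. m \<ge> 2 \<and> y = list_pow z m)"

end

theory Submission
  imports Defs
begin


definition per :: "(nat \<Rightarrow> 'a) \<Rightarrow> nat \<Rightarrow> nat \<Rightarrow> bool" where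
  "per f n p \<longleftrightarrow> (\<forall>t. t + p < n \<longrightarrow> f t = f (t + p))"

lemma perD: "per f n p \<Longrightarrow> t + p < n \<Longrightarrow> f t = f (t + p)"
  unfolding per_def by blast

lemma per_diff:
  assumes "per f n p" "per f n q" "p < q" "p + q \<le> n"
  shows "per f n (q - p)"
  unfolding per_def
proof (intro allI impI)
  fix t assume t: "t + (q - p) < n"
  show "f t = f (t + (q - p))"
  proof (cases "t + q < n")
    case True
    have e: "t + (q - p) + p = t + q" using assms(3) by simp
    have c: "t + (q - p) + p < n" using True e by simp
    have "f t = f (t + q)" using perD[OF assms(2) True] .
    also have "\<dots> = f (t + (q - p) + p)" by (simp only: e)
    also have "\<dots> = f (t + (q - p))" by (rule perD[OF assms(1) c, symmetric])
    finally show ?thesis .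
  next
    case False
    then have tp: "t \<ge> p" using assms(3,4) t by linarith
    have e1: "t - p + p = t" using tp by simp
    have e2: "t - p + q = t + (q - p)" using tp assms(3) by simp
    have c1: "t - p + p < n" using tp t assms(3) by simp
    have c2: "t - p + q < n" using tp t assms(3) by simp
    have "f t = f (t - p + p)" by (simp only: e1)
    also have "\<dots> = f (t - p)" by (rule perD[OF assms(1) c1, symmetric])
    also have "\<dots> = f (t - p + q)" by (rule perD[OF assms(2) c2])
    also have "\<dots> = f (t + (q - p))" by (simp only: e2)
    finally show ?thesis .
  qed
qed

lemma fw:
  "per f n p \<Longrightarrow> per f n q \<Longrightarrow> 0 < p \<Longrightarrow> 0 < q \<Longrightarrow> p + q \<le> n \<Longrightarrow> per f n (gcd p q)"
proof (induction "p + q" arbitrary: p q rule: less_induct)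
  case less
  consider "p = q" | "p < q" | "q < p" by linarith
  then show ?case
  proof cases
    case 1 then show ?thesis using less.prems(1) by simp
  next
    case 2
    have pd: "per f n (q - p)" using per_diff[OF less.prems(1,2) 2 less.prems(5)] .
    have "per f n (gcd p (q - p))"
    proof (rule less.hyps)
      show "p + (q - p) < p + q" using 2 less.prems(3) by simp
      show "0 < q - p" using 2 by simp
      show "p + (q - p) \<le> n" using 2 less.prems(5) by simp
    qed (fact less.prems(1) pd less.prems(3))+
    moreover have g: "gcd (q - p) p = gcd q p" using 2 by (simp add: gcd_diff1_nat)
    then have "gcd p (q - p) = gcd p q" by (metis gcd.commute)
    ultimately show ?thesis by simp
  next
    case 3
    have pd: "per f n (p - q)" using per_diff[OF less.prems(2,1) 3] less.prems(5) by simp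
    have "per f n (gcd q (p - q))"
    proof (rule less.hyps)
      show "q + (p - q) < p + q" using 3 less.prems(4) by simp
      show "0 < p - q" using 3 by simp
      show "q + (p - q) \<le> n" using 3 less.prems(5) by simp
    qed (fact less.prems(2) pd less.prems(4))+
    moreover have g: "gcd (p - q) q = gcd p q" using 3 by (simp add: gcd_diff1_nat)
    then have "gcd q (p - q) = gcd p q" by (metis gcd.commute)
    ultimately show ?thesis by simp
  qed
qed

lemma length_list_pow[simp]: "length (list_pow z m) = m * length z"
  by (induction m) (auto simp: list_pow_def length_concat sum_list_replicate)

lemma list_pow_Suc: "list_pow z (Suc m) = z @ list_pow z m"
  by (simp add: list_pow_def)

lemma nth_list_pow: "k < m * length z \<Longrightarrow> list_pow z m ! k = z ! (k mod length z)"
proof (induction m arbitrary: k)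
  case 0 then show ?case by simp
next
  case (Suc m)
  show ?case
  proof (cases "k < length z")
    case True then show ?thesis by (simp add: list_pow_Suc nth_append)
  next
    case False
    then have "list_pow z (Suc m) ! k = list_pow z m ! (k - length z)"
      by (simp add: list_pow_Suc nth_append)
    also have "\<dots> = z ! ((k - length z) mod length z)" using Suc False by (intro Suc.IH) auto
    also have "(k - length z) mod length z = k mod length z" using False by (simp add: le_mod_geq)
    finally show ?thesis .
  qed
qed

lemma shape_per:
  assumes "\<forall>t<n. u t = y ! ((t + s) mod length y)"
  shows "per u n (length y)"
  unfolding per_def
proof (intro allI impI)
  fix t assume "t + length y < n"
  then have "u t = y ! ((t + s) mod length y)" "u (t + length y) = y ! ((t + length y + s) mod length y)"
    using assms by auto
  moreover have "(t + length y + s) mod length y = (t + s) mod length y"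
  proof -
    have "t + length y + s = (t + s) + length y" by simp
    then show ?thesis by (simp only: mod_add_self2)
  qed
  ultimately show "u t = u (t + length y)" by simp
qed

lemma core:
  assumes prim: "primitive y"
    and sh: "\<forall>t<n. u t = y ! ((t + s) mod length y)"
    and pq: "per u n q" and q: "0 < q" and len: "length y + q \<le> n"
  shows "length y dvd q"
proof -
  define L where "L = length y"
  have L0: "0 < L" using prim by (simp add: primitive_def L_def)
  define d where "d = gcd L q"
  have pd: "per u n d" unfolding d_def
    using fw[OF shape_per[OF sh] pq] L0 q len by (simp add: L_def)
  have d0: "0 < d" using q by (simp add: d_def)
  have dL: "d dvd L" by (simp add: d_def)
  have dq: "d \<le> q" using q by (simp add: d_def)
  have cyc: "y ! k = y ! ((k + d) mod L)" if k: "k < L" for k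
  proof -
    define t where "t = (k + (L - s mod L)) mod L"
    have tL: "t < L" using L0 by (simp add: t_def)
    have ts: "(t + s) mod L = k"
    proof -
      have "(t + s) mod L = (k + (L - s mod L) + s) mod L" by (simp add: t_def mod_add_left_eq)
      also have "\<dots> = (k + (L - s mod L) + s mod L) mod L" by (simp add: mod_add_right_eq)
      also have "k + (L - s mod L) + s mod L = k + L" using mod_less_divisor[OF L0, of s]
        by linarith
      finally show ?thesis using k by simp
    qed
    have "t + d < n" using tL dq len unfolding L_def by simp
    then have "u t = u (t + d)" by (rule perD[OF pd])
    moreover have "u t = y ! k" using sh ts tL len unfolding L_def by auto
    moreover have "u (t + d) = y ! ((t + d + s) mod L)" using sh tL dq len unfolding L_def by auto
    moreover have "(t + d + s) mod L = (k + d) mod L"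
    proof -
      have "(t + d + s) mod L = ((t + s) mod L + d) mod L" by (metis mod_add_left_eq add.commute add.left_commute)
      then show ?thesis using ts by simp
    qed
    ultimately show ?thesis by simp
  qed
  have red: "k < L \<longrightarrow> y ! k = y ! (k mod d)" for k
  proof (induction k rule: less_induct)
    case (less k)
    show ?case
    proof (intro impI)
      assume kL: "k < L"
      show "y ! k = y ! (k mod d)"
      proof (cases "k < d")
        case True then show ?thesis by simp
      next
        case False
        have kdL: "k - d < L" using kL by simp
        have "y ! (k - d) = y ! ((k - d + d) mod L)" by (rule cyc[OF kdL])
        also have "\<dots> = y ! k" using False kL by simp
        finally have "y ! k = y ! (k - d)" by simp
        also have "\<dots> = y ! ((k - d) mod d)"
        proof -
          have "k - d < k" using False d0 by simp
          then show ?thesis using less.IH[of "k - d"] kdL by blast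
        qed
        also have "(k - d) mod d = k mod d" using False by (simp add: le_mod_geq)
        finally show ?thesis .
      qed
    qed
  qed
  have "d = L"
  proof (rule ccontr)
    assume dne: "d \<noteq> L"
    have "d \<le> L" using dvd_imp_le[OF dL L0] .
    then have dlt: "d < L" using dne by linarith
    obtain c where c: "L = d * c" using dL by blast
    have "c \<noteq> 0" using c L0 by auto
    moreover have "c \<noteq> 1" using c dlt by auto
    ultimately have c2: "c \<ge> 2" by linarith
    have ltd: "length (take d y) = d" using dlt unfolding L_def by simp
    have "y = list_pow (take d y) c"
    proof (rule nth_equalityI)
      show "length y = length (list_pow (take d y) c)" using c ltd by (simp add: L_def[symmetric])
      fix k assume k: "k < length y"
      have kL: "k < L" using k by (simp add: L_def)
      have kc: "k < c * length (take d y)" using kL c ltd by (simp add: mult.commute)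
      have "list_pow (take d y) c ! k = take d y ! (k mod d)" using nth_list_pow[OF kc] ltd by simp
      also have "\<dots> = y ! (k mod d)" using d0 by simp
      also have "\<dots> = y ! k" using red[of k] kL by simp
      finally show "y ! k = list_pow (take d y) c ! k" by simp
    qed
    then show False using prim c2 unfolding primitive_def by blast
  qed
  moreover have "d dvd q" by (simp add: d_def)
  ultimately show ?thesis by (simp add: L_def)
qed



lemma factor_map: "j \<le> k \<Longrightarrow> factor (map w [j..<k]) w"
  unfolding factor_def by (rule exI[of _ j]) simp

lemma occ:
  assumes "factor (list_pow y m) w"
  shows "\<exists>i. \<forall>t<m * length y. w (i + t) = y ! (t mod length y)"
proof -
  obtain i where i: "list_pow y m = map w [i..<i + m * length y]"
    using assms unfolding factor_def by auto
  have "w (i + t) = y ! (t mod length y)" if "t < m * length y" for t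
  proof -
    have "w (i + t) = map w [i..<i + m * length y] ! t" using that by simp
    also have "\<dots> = list_pow y m ! t" using i by simp
    finally show ?thesis using nth_list_pow[OF that] by simp
  qed
  then show ?thesis by blast
qed

definition RS :: "(nat \<Rightarrow> 'a) \<Rightarrow> nat \<Rightarrow> 'a list set" where
  "RS w n = {u. length u = n \<and> (\<exists>a b. a \<noteq> b \<and> factor (u @ [a]) w \<and> factor (u @ [b]) w)}"

lemma rsl:
  assumes nep: "\<not> (\<exists>i0 P. 0 < P \<and> (\<forall>k\<ge>i0. w (k + P) = w k))"
    and L0: "0 < length y"
    and pw: "\<forall>m\<ge>1. factor (list_pow y m) w"
  shows "\<exists>u s. u \<in> RS w n \<and> (\<forall>t<n. u ! t = y ! ((t + s) mod length y))"
proof -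
  define L where "L = length y"
  define m where "m = n + 1"
  obtain i where i: "\<forall>t<m * L. w (i + t) = y ! (t mod L)"
    using occ[of y m w] pw by (auto simp: m_def L_def)
  have "\<not> (0 < L \<and> (\<forall>k\<ge>i. w (k + L) = w k))" using nep by blast
  then have ex: "\<exists>k\<ge>i. w (k + L) \<noteq> w k" using L0 by (auto simp: L_def)
  define k0 where "k0 = (LEAST k. i \<le> k \<and> w (k + L) \<noteq> w k)"
  have k0: "i \<le> k0" "w (k0 + L) \<noteq> w k0"
    using LeastI_ex[of "\<lambda>k. i \<le> k \<and> w (k + L) \<noteq> w k"] ex unfolding k0_def by auto
  have below: "w (t + L) = w t" if "i \<le> t" "t < k0" for t
    using not_less_Least[of t "\<lambda>k. i \<le> k \<and> w (k + L) \<noteq> w k"] that unfolding k0_def by auto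
  have k0big: "i + (m - 1) * L \<le> k0"
  proof (rule ccontr)
    assume "\<not> ?thesis"
    then have lt: "k0 - i + L < m * L" using k0 by (cases m) auto
    have e1: "k0 + L = i + (k0 - i + L)" using k0(1) by simp
    have e2: "k0 = i + (k0 - i)" using k0(1) by simp
    have "w (i + (k0 - i + L)) = y ! ((k0 - i + L) mod L)" using i lt by blast
    then have "w (k0 + L) = y ! ((k0 - i + L) mod L)" by (simp only: e1[symmetric])
    moreover have "w (i + (k0 - i)) = y ! ((k0 - i) mod L)" using i lt by simp
    then have "w k0 = y ! ((k0 - i) mod L)" by (simp only: e2[symmetric])
    ultimately show False using k0(2) by simp
  qed
  have W: "\<forall>r. i + r < k0 + L \<longrightarrow> w (i + r) = y ! (r mod L)"
  proof (intro allI)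
    fix r show "i + r < k0 + L \<longrightarrow> w (i + r) = y ! (r mod L)"
    proof (induction r rule: less_induct)
      case (less r)
      show ?case
      proof (intro impI)
        assume r: "i + r < k0 + L"
        show "w (i + r) = y ! (r mod L)"
        proof (cases "r < m * L")
          case True then show ?thesis using i by simp
        next
          case False
          then have rL: "r \<ge> L" unfolding m_def by simp
          have rl: "r - L < r" using rL L0 unfolding L_def by arith
          have rr: "i + (r - L) < k0 + L" using r rL by simp
          have ih: "w (i + (r - L)) = y ! ((r - L) mod L)" using less.IH[OF rl] rr by blast
          have "w (i + r) = w (i + (r - L) + L)" using rL by simp
          also have "\<dots> = w (i + (r - L))" using rL r L0 by (intro below) (auto simp: L_def)
          also have "\<dots> = y ! ((r - L) mod L)" by (rule ih)
          also have "(r - L) mod L = r mod L" using rL by (simp add: le_mod_geq)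
          finally show ?thesis .
        qed
      qed
    qed
  qed
  have L1: "1 \<le> L" using L0 unfolding L_def by linarith
  have "n * 1 \<le> n * L" by (rule mult_le_mono2[OF L1])
  then have "n \<le> (m - 1) * L" unfolding m_def by (simp add: mult.commute)
  then have nk: "i + n \<le> k0" using k0big by linarith
  define u where "u = map w [k0 + L - n..<k0 + L]"
  have lu: "length u = n" using nk by (simp add: u_def)
  have fb: "factor (u @ [w (k0 + L)]) w"
  proof -
    have "u @ [w (k0 + L)] = map w [k0 + L - n..<Suc (k0 + L)]" using nk by (simp add: u_def)
    then show ?thesis using factor_map[of "k0 + L - n" "Suc (k0 + L)" w] by simp
  qed
  have u2: "u = map w [k0 - n..<k0]"
  proof (rule nth_equalityI)
    show "length u = length (map w [k0 - n..<k0])" using lu nk by simp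
    fix t assume t: "t < length u"
    have u1: "u ! t = w (k0 + L - n + t)" using t lu nk by (simp add: u_def)
    have eq: "k0 + L - n + t = k0 - n + t + L" using nk by simp
    from u1 have "u ! t = w (k0 - n + t + L)" by (simp only: eq)
    also have "\<dots> = w (k0 - n + t)" using t lu nk by (intro below) auto
    finally show "u ! t = map w [k0 - n..<k0] ! t" using t lu nk by simp
  qed
  have fa: "factor (u @ [w k0]) w"
  proof -
    have "u @ [w k0] = map w [k0 - n..<Suc k0]" using nk u2 by simp
    then show ?thesis using factor_map[of "k0 - n" "Suc k0" w] by simp
  qed
  have neq: "w k0 \<noteq> w (k0 + L)" using k0(2) by simp
  have R: "u \<in> RS w n" unfolding RS_def mem_Collect_eq
    by (intro conjI lu exI[of _ "w k0"] exI[of _ "w (k0 + L)"] neq fa fb)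
  have S: "\<forall>t<n. u ! t = y ! ((t + (k0 + L - n - i)) mod length y)"
  proof (intro allI impI)
    fix t assume t: "t < n"
    have u1: "u ! t = w (k0 + L - n + t)" using t nk by (simp add: u_def)
    have eq: "k0 + L - n + t = i + (t + (k0 + L - n - i))" using nk by simp
    from u1 have "u ! t = w (i + (t + (k0 + L - n - i)))" by (simp only: eq)
    also have "\<dots> = y ! ((t + (k0 + L - n - i)) mod L)"
    proof -
      have "i + (t + (k0 + L - n - i)) < k0 + L" using t nk by simp
      then show ?thesis using W by blast
    qed
    finally show "u ! t = y ! ((t + (k0 + L - n - i)) mod length y)" by (simp add: L_def)
  qed
  show ?thesis using R S by (intro exI[of _ u] exI[of _ "k0 + L - n - i"] conjI)
qed



lemma factor_set: "factor u w \<Longrightarrow> \<forall>i. w i \<in> \<Sigma> \<Longrightarrow> set u \<subseteq> \<Sigma>"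
proof -
  assume "factor u w" "\<forall>i. w i \<in> \<Sigma>"
  then obtain i where "u = map w [i..<i + length u]" unfolding factor_def by auto
  then have "set u = w ` set [i..<i + length u]" by (metis set_map)
  then show ?thesis using \<open>\<forall>i. w i \<in> \<Sigma>\<close> by auto
qed

lemma factor_butlast: "factor (u @ [a]) w \<Longrightarrow> factor u w"
proof -
  assume "factor (u @ [a]) w"
  then obtain i where i: "u @ [a] = map w [i..<i + Suc (length u)]" unfolding factor_def by auto
  then have "u @ [a] = map w [i..<i + length u] @ [w (i + length u)]" by simp
  then have "u = map w [i..<i + length u]" by simp
  then show "factor u w" unfolding factor_def by blast
qed

lemma factor_ext: "factor u w \<Longrightarrow> \<exists>a. factor (u @ [a]) w"
proof -
  assume "factor u w"
  then obtain i where i: "u = map w [i..<i + length u]" unfolding factor_def by auto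
  define n where "n = length u"
  have i': "u = map w [i..<i + n]" using i by (simp add: n_def)
  have "u @ [w (i + n)] = map w [i..<i + Suc n]" unfolding i' by simp
  moreover have "length (u @ [w (i + n)]) = Suc n" by (simp add: n_def)
  ultimately have "factor (u @ [w (i + n)]) w" unfolding factor_def by metis
  then show ?thesis by blast
qed

lemma finite_F:
  assumes "finite \<Sigma>" "\<forall>i. w i \<in> \<Sigma>"
  shows "finite (factors_of_length w m)"
proof (rule finite_subset[OF _ finite_lists_length_eq[OF assms(1), of m]])
  show "factors_of_length w m \<subseteq> {xs. set xs \<subseteq> \<Sigma> \<and> length xs = m}"
    using factor_set assms(2) unfolding factors_of_length_def by blast
qed

lemma count_step:
  assumes fin: "finite \<Sigma>" "\<forall>i. w i \<in> \<Sigma>"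
  shows "card (factors_of_length w n) + card (RS w n) \<le> card (factors_of_length w (Suc n))"
proof -
  define F where "F m = factors_of_length w m" for m
  define c where "c u = (SOME a. factor (u @ [a]) w)" for u
  define f where "f u = u @ [c u]" for u
  define g where "g u = u @ [SOME b. factor (u @ [b]) w \<and> b \<noteq> c u]" for u
  have RSF: "RS w n \<subseteq> F n"
  proof
    fix u assume u: "u \<in> RS w n"
    then obtain a where "factor (u @ [a]) w" unfolding RS_def by blast
    then have "factor u w" by (rule factor_butlast)
    then show "u \<in> F n" using u unfolding RS_def F_def factors_of_length_def by simp
  qed
  have finF: "finite (F m)" for m unfolding F_def by (rule finite_F[OF fin])
  have fF: "f u \<in> F (Suc n)" if "u \<in> F n" for u
  proof -
    have fu: "factor u w" and "length u = n" using that unfolding F_def factors_of_length_def by auto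
    have ex: "\<exists>a. factor (u @ [a]) w" by (rule factor_ext[OF fu])
    have "factor (u @ [c u]) w" unfolding c_def by (rule someI_ex[OF ex])
    then show ?thesis using \<open>length u = n\<close> unfolding f_def F_def factors_of_length_def by simp
  qed
  have gprop: "factor (g u) w \<and> last (g u) \<noteq> c u \<and> butlast (g u) = u" if uR: "u \<in> RS w n" for u
  proof -
    obtain a b where ab: "a \<noteq> b" "factor (u @ [a]) w" "factor (u @ [b]) w"
      using uR unfolding RS_def by blast
    have "\<exists>b. factor (u @ [b]) w \<and> b \<noteq> c u"
    proof (cases "a = c u")
      case True then show ?thesis using ab by (intro exI[of _ b]) auto
    next
      case False then show ?thesis using ab by (intro exI[of _ a]) auto
    qed
    from someI_ex[OF this] show ?thesis unfolding g_def by simp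
  qed
  have gF: "g u \<in> F (Suc n)" if "u \<in> RS w n" for u
  proof -
    have "length u = n" using that unfolding RS_def by simp
    then show ?thesis using gprop[OF that] unfolding g_def F_def factors_of_length_def by simp
  qed
  have injf: "inj_on f (F n)"
  proof (rule inj_onI)
    fix u v assume "f u = f v"
    then have "butlast (f u) = butlast (f v)" by simp
    then show "u = v" by (simp add: f_def)
  qed
  have injg: "inj_on g (RS w n)"
  proof (rule inj_onI)
    fix u v assume uv: "u \<in> RS w n" "v \<in> RS w n" "g u = g v"
    have "u = butlast (g u)" using gprop[OF uv(1)] by simp
    also have "\<dots> = butlast (g v)" using uv(3) by simp
    also have "\<dots> = v" using gprop[OF uv(2)] by simp
    finally show "u = v" .
  qed
  have disj: "f ` F n \<inter> g ` RS w n = {}"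
  proof (rule ccontr)
    assume "f ` F n \<inter> g ` RS w n \<noteq> {}"
    then obtain u v where u: "u \<in> F n" and v: "v \<in> RS w n" and e: "f u = g v" by blast
    have "butlast (f u) = u" by (simp add: f_def)
    then have uv: "u = v" using e gprop[OF v] by simp
    have "last (f u) = c u" by (simp add: f_def)
    then show False using e gprop[OF v] uv by simp
  qed
  have "card (F n) + card (RS w n) = card (f ` F n) + card (g ` RS w n)"
    using card_image[OF injf] card_image[OF injg] by simp
  also have "\<dots> = card (f ` F n \<union> g ` RS w n)"
    using disj finF finite_subset[OF RSF finF] by (simp add: card_Un_disjoint)
  also have "\<dots> \<le> card (F (Suc n))"
    using fF gF finF by (intro card_mono) auto
  finally show ?thesis unfolding F_def complexity_def .
qed



lemma grow:
  assumes fin: "finite \<Sigma>" "\<forall>i. w i \<in> \<Sigma>"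
    and RSK: "\<And>n. N \<le> n \<Longrightarrow> K \<le> card (RS w n)"
  shows "K * j \<le> complexity w (N + j)"
proof (induction j)
  case 0 then show ?case by simp
next
  case (Suc j)
  have "K * Suc j = K * j + K" by simp
  also have "\<dots> \<le> complexity w (N + j) + card (RS w (N + j))"
    using Suc.IH RSK[of "N + j"] by simp
  also have "\<dots> \<le> complexity w (Suc (N + j))"
    using count_step[OF fin, of "N + j"] unfolding complexity_def .
  finally show ?case by simp
qed

theorem theorem2:
  fixes \<Sigma> :: "'a set" and w :: "nat \<Rightarrow> 'a"
  assumes "finite \<Sigma>" and "\<forall>i. w i \<in> \<Sigma>"
    and "linear_complexity w"
  shows "finite {y. factor y w \<and> primitive y \<and> (\<forall>n\<ge>1. factor (list_pow y n) w)}"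
proof -
  define S where "S = {y. factor y w \<and> primitive y \<and> (\<forall>n\<ge>1. factor (list_pow y n) w)}"
  have bnd: "finite S" if b: "\<forall>y\<in>S. length y \<le> P" for P
  proof (rule finite_subset[OF _ finite_lists_length_le[OF assms(1), of P]])
    show "S \<subseteq> {xs. set xs \<subseteq> \<Sigma> \<and> length xs \<le> P}"
    proof
      fix y assume y: "y \<in> S"
      then have "factor y w" unfolding S_def by simp
      then have "set y \<subseteq> \<Sigma>" using factor_set assms(2) by blast
      then show "y \<in> {xs. set xs \<subseteq> \<Sigma> \<and> length xs \<le> P}" using b y by simp
    qed
  qed
  have Sprim: "primitive y" if "y \<in> S" for y using that unfolding S_def by simp
  have Spos: "0 < length y" if "y \<in> S" for y using Sprim[OF that] unfolding primitive_def by simp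
  have Spw: "\<forall>m\<ge>1. factor (list_pow y m) w" if "y \<in> S" for y using that unfolding S_def by simp
  have "finite S"
  proof (cases "\<exists>i0 P. 0 < P \<and> (\<forall>k\<ge>i0. w (k + P) = w k)")
    case True
    then obtain i0 P where P0: "0 < P" and per0: "\<forall>k\<ge>i0. w (k + P) = w k" by blast
    have "\<forall>y\<in>S. length y \<le> P"
    proof
      fix y assume yS: "y \<in> S"
      define L where "L = length y"
      have L0: "0 < L" using Spos[OF yS] by (simp add: L_def)
      define m where "m = i0 + L + P + 1"
      have "factor (list_pow y m) w" using Spw[OF yS] by (simp add: m_def)
      then obtain i where i: "\<forall>t<m * L. w (i + t) = y ! (t mod L)"
        using occ[of y m w] unfolding L_def by blast
      define u where "u t = w (i + i0 + t)" for t
      have mL: "m \<le> m * L" using L0 by simp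
      have sh: "\<forall>t<L + P. u t = y ! ((t + i0) mod length y)"
      proof (intro allI impI)
        fix t assume t: "t < L + P"
        have lt: "i0 + t < m * L" using t mL unfolding m_def by linarith
        have "u t = w (i + (i0 + t))" by (simp add: u_def add.assoc)
        also have "\<dots> = y ! ((i0 + t) mod L)" using i lt by blast
        finally show "u t = y ! ((t + i0) mod length y)" by (simp add: L_def add.commute)
      qed
      have pp: "per u (L + P) P"
        unfolding per_def
      proof (intro allI impI)
        fix t assume "t + P < L + P"
        have "i + i0 + t \<ge> i0" by simp
        then have "w (i + i0 + t + P) = w (i + i0 + t)" using per0 by blast
        then show "u t = u (t + P)" by (simp add: u_def add.assoc)
      qed
      have "L dvd P" using core[OF Sprim[OF yS] sh[unfolded L_def] pp[unfolded L_def] P0] by (simp add: L_def)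
      then show "length y \<le> P" using P0 by (simp add: L_def dvd_imp_le)
    qed
    then show ?thesis by (rule bnd)
  next
    case False
    show ?thesis
    proof (rule ccontr)
      assume infS: "infinite S"
      have infL: "infinite (length ` S)"
      proof
        assume fl: "finite (length ` S)"
        have "\<forall>y\<in>S. length y \<le> Max (length ` S)" using fl by simp
        then have "finite S" by (rule bnd)
        then show False using infS by simp
      qed
      obtain A B :: real where AB: "\<forall>n. real (complexity w n) \<le> A * real n + B"
        using assms(3) unfolding linear_complexity_def by blast
      define K :: nat where "K = nat \<lceil>A\<rceil> + 1"
      have KA: "A < real K" unfolding K_def by linarith
      obtain T where T: "finite T" "card T = K" "T \<subseteq> length ` S"
        using infinite_arbitrarily_large[OF infL] by blast
      define M where "M = Max (insert 0 T)"
      have TM: "l \<le> M" if "l \<in> T" for l unfolding M_def using T(1) that by simp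
      have RSK: "K \<le> card (RS w n)" if n: "2 * M \<le> n" for n
      proof -
        have "\<forall>l\<in>T. \<exists>u. u \<in> RS w n \<and> (\<exists>y. y \<in> S \<and> length y = l \<and> (\<exists>s. \<forall>t<n. u ! t = y ! ((t + s) mod length y)))"
        proof
          fix l assume l: "l \<in> T"
          then obtain y where y: "y \<in> S" "length y = l" using T(3) by blast
          obtain u s where "u \<in> RS w n" "\<forall>t<n. u ! t = y ! ((t + s) mod length y)"
            using rsl[OF False Spos[OF y(1)] Spw[OF y(1)], of n] by blast
          then show "\<exists>u. u \<in> RS w n \<and> (\<exists>y. y \<in> S \<and> length y = l \<and> (\<exists>s. \<forall>t<n. u ! t = y ! ((t + s) mod length y)))"
            using y by blast
        qed
        then obtain U where U: "\<forall>l\<in>T. U l \<in> RS w n \<and> (\<exists>y. y \<in> S \<and> length y = l \<and> (\<exists>s. \<forall>t<n. U l ! t = y ! ((t + s) mod length y)))"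
          by (metis bchoice)
        have dv: "l1 dvd l2" if l1: "l1 \<in> T" and l2: "l2 \<in> T" and e: "U l1 = U l2" for l1 l2
        proof -
          obtain y1 s1 where y1: "y1 \<in> S" "length y1 = l1" "\<forall>t<n. U l1 ! t = y1 ! ((t + s1) mod length y1)"
            using U l1 by blast
          obtain y2 s2 where y2: "y2 \<in> S" "length y2 = l2" "\<forall>t<n. U l2 ! t = y2 ! ((t + s2) mod length y2)"
            using U l2 by blast
          have sh1: "\<forall>t<n. (\<lambda>t. U l1 ! t) t = y1 ! ((t + s1) mod length y1)" using y1(3) by simp
          have sh2: "\<forall>t<n. (\<lambda>t. U l1 ! t) t = y2 ! ((t + s2) mod length y2)" using y2(3) e by simp
          have p2: "per (\<lambda>t. U l1 ! t) n (length y2)" by (rule shape_per[OF sh2])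
          have "length y1 + length y2 \<le> n" using TM[OF l1] TM[OF l2] y1(2) y2(2) n by linarith
          then have "length y1 dvd length y2"
            by (rule core[OF Sprim[OF y1(1)] sh1 p2 Spos[OF y2(1)]])
          then show ?thesis using y1(2) y2(2) by simp
        qed
        have inj: "inj_on U T"
        proof (rule inj_onI)
          fix l1 l2 assume "l1 \<in> T" "l2 \<in> T" "U l1 = U l2"
          then show "l1 = l2" using dv[of l1 l2] dv[of l2 l1] by (simp add: dvd_antisym)
        qed
        have sub: "U ` T \<subseteq> RS w n" using U by blast
        have finRS: "finite (RS w n)"
        proof (rule finite_subset[OF _ finite_F[OF assms(1,2), of n]])
          show "RS w n \<subseteq> factors_of_length w n"
          proof
            fix u assume u: "u \<in> RS w n"
            then obtain a where "factor (u @ [a]) w" unfolding RS_def by blast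
            then have "factor u w" by (rule factor_butlast)
            then show "u \<in> factors_of_length w n" using u unfolding RS_def factors_of_length_def by simp
          qed
        qed
        have "card T \<le> card (RS w n)" by (rule card_inj_on_le[OF inj sub finRS])
        then show ?thesis using T(2) by simp
      qed
      have gr: "K * j \<le> complexity w (2 * M + j)" for j
        by (rule grow[OF assms(1,2) RSK])
      have pos: "0 < real K - A" using KA by simp
      obtain j where j: "A * real (2 * M) + B < real j * (real K - A)"
        using ex_less_of_nat_mult[OF pos] by blast
      have "real (K * j) \<le> real (complexity w (2 * M + j))" using gr[of j] by linarith
      also have "\<dots> \<le> A * real (2 * M + j) + B" using AB by blast
      finally have "real K * real j \<le> A * real (2 * M) + A * real j + B"
        by (simp add: distrib_left)
      then show False using j by (simp add: algebra_simps)
    qed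
  qed
  then show ?thesis unfolding S_def .
qed

end
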